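(* Let $d\ge 2$, $2\le r\le d$ and $n_1\ge n_2\ge\cdots\ge n_d\ge 2$ be integers. If a Latin hypercuboid of dimension $d$, type $(n_1,\dots,n_d)$, class $r$ and order $\prod_{i=1}^r n_i$ exists, then \[\sum_{i=1}^d n_i-\prod_{i=1}^r n_i\le d-1.\]
   Context: For integers $n_1\ge\cdots\ge n_d\ge 2$ and $1\le r\le d$, an $r$-dimensional subarray of $[n_1]\times\cdots\times[n_d]$ (where $[m]=\{1,\dots,m\}$) is a set of cells obtained by fixing the values of $d-r$ of the coordinates and letting the other $r$ coordinates range freely. A Latin hypercuboid of dimension $d$, type $(n_1,\dots,n_d)$, class $r$ and order $n=\prod_{i=1}^r n_i$, written $\mathrm{LHC}(n_1,\dots,n_d,r)$, is a map from $[n_1]\times\cdots\times[n_d]$ to a set of $n$ symbols such that in every $r$-dimensional subarray each symbol occurs at most once. When $n_1=\cdots=n_d=n$ it is called a Latin hypercube $\mathrm{LHC}(d,n,r)$ (with $n^r$ symbols). *)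

theory Defs
  imports "HOL-Library.FuncSet"
begin

definition cells :: "nat \<Rightarrow> (nat \<Rightarrow> nat) \<Rightarrow> (nat \<Rightarrow> nat) set" where
  "cells d n = PiE {1..d} (\<lambda>i. {1..n i})"

definition subarray :: "nat \<Rightarrow> (nat \<Rightarrow> nat) \<Rightarrow> nat set \<Rightarrow> (nat \<Rightarrow> nat) \<Rightarrow> (nat \<Rightarrow> nat) set" where
  "subarray d n R c = {x \<in> cells d n. \<forall>i \<in> {1..d} - R. x i = c i}"

definition is_LHC :: "nat \<Rightarrow> (nat \<Rightarrow> nat) \<Rightarrow> nat \<Rightarrow> ((nat \<Rightarrow> nat) \<Rightarrow> 'a) \<Rightarrow> 'a set \<Rightarrow> bool" where
  "is_LHC d n r L S \<longleftrightarrow>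
     finite S \<and> card S = (\<Prod>i=1..r. n i) \<and>
     L ` cells d n \<subseteq> S \<and>
     (\<forall>R c. R \<subseteq> {1..d} \<and> card R = r \<and> c \<in> cells d n \<longrightarrow>
        inj_on L (subarray d n R c))"

end

theory Submission
  imports Defs
begin

lemma LHC_two_diff:
  assumes lhc: "is_LHC d n r L S" and r2: "2 \<le> r" and rd: "r \<le> d"
    and x: "x \<in> cells d n" and y: "y \<in> cells d n" and xy: "x \<noteq> y"
    and diff: "\<forall>i\<in>{1..d}. i \<noteq> j \<and> i \<noteq> k \<longrightarrow> x i = y i"
  shows "L x \<noteq> L y"
proof -
  define D where "D = {i\<in>{1..d}. i = j \<or> i = k}"
  have "D \<subseteq> {j,k}" unfolding D_def by blast
  hence "card D \<le> card {j,k}" by (intro card_mono) auto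
  also have "\<dots> \<le> 2" by (simp add: card_insert_le_m1)
  finally have cD: "card D \<le> r" using r2 by simp
  have "D \<subseteq> {1..d}" unfolding D_def by blast
  then obtain R where R: "D \<subseteq> R" "R \<subseteq> {1..d}" "card R = r"
    using exists_subset_between[OF cD, of "{1..d}"] rd by auto
  have inj: "inj_on L (subarray d n R x)" using lhc R x unfolding is_LHC_def by blast
  have "x \<in> subarray d n R x" using x unfolding subarray_def by blast
  moreover have "y \<in> subarray d n R x"
  proof -
    have "\<forall>i \<in> {1..d} - R. y i = x i"
    proof
      fix i assume i: "i \<in> {1..d} - R"
      hence "i \<notin> D" using R(1) by blast
      hence "i \<noteq> j \<and> i \<noteq> k" using i unfolding D_def by blast
      thus "y i = x i" using diff i by auto
    qed
    thus ?thesis using y unfolding subarray_def by blast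
  qed
  ultimately show ?thesis using inj xy by (meson inj_on_contraD)
qed
theorem mainTheorem2:
  fixes d r :: nat and n :: "nat \<Rightarrow> nat" and L :: "(nat \<Rightarrow> nat) \<Rightarrow> 'a" and S :: "'a set"
  assumes "d \<ge> 2" and "2 \<le> r" and "r \<le> d"
    and "\<And>i j. 1 \<le> i \<Longrightarrow> i \<le> j \<Longrightarrow> j \<le> d \<Longrightarrow> n j \<le> n i"
    and "\<And>i. 1 \<le> i \<Longrightarrow> i \<le> d \<Longrightarrow> n i \<ge> 2"
    and "is_LHC d n r L S"
  shows "int (\<Sum>i=1..d. n i) - int (\<Prod>i=1..r. n i) \<le> int d - 1"
proof -
  note lhc = assms(6)
  define c0 :: "nat \<Rightarrow> nat" where "c0 = (\<lambda>i. if i \<in> {1..d} then 1 else undefined)"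
  have n1: "\<And>i. Suc 0 \<le> i \<Longrightarrow> i \<le> d \<Longrightarrow> Suc 0 \<le> n i"
    using assms(5) by (metis One_nat_def Suc_1 Suc_leD)
  define f where "f = (\<lambda>(j::nat, v::nat). c0(j := v))"
  define Sig where "Sig = (SIGMA j:{1..d}. {2..n j})"
  have c0c: "c0 \<in> cells d n" unfolding cells_def c0_def using n1 by (auto simp: PiE_def extensional_def)
  have fc: "f p \<in> cells d n" if "p \<in> Sig" for p
    using that c0c unfolding Sig_def f_def cells_def c0_def using n1
    by (auto simp: PiE_def extensional_def)
  have finSig: "finite Sig" unfolding Sig_def by auto
  have cardSig: "card Sig = (\<Sum>j=1..d. n j - 1)" unfolding Sig_def by simp
  have injLf: "inj_on (L \<circ> f) Sig"
  proof (rule inj_onI)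
    fix p q assume p: "p \<in> Sig" and q: "q \<in> Sig" and e: "(L \<circ> f) p = (L \<circ> f) q"
    obtain j v where pj: "p = (j,v)" by (cases p)
    obtain k w where qk: "q = (k,w)" by (cases q)
    show "p = q"
    proof (rule ccontr)
      assume "p \<noteq> q"
      have jd: "j \<in> {1..d}" "2 \<le> v" using p pj unfolding Sig_def by auto
      have "f p \<noteq> f q"
      proof (cases "j = k")
        case True
        hence "v \<noteq> w" using \<open>p \<noteq> q\<close> pj qk by simp
        hence "f p j \<noteq> f q j" using True pj qk unfolding f_def by simp
        thus ?thesis by metis
      next
        case False
        hence "f q j = 1" using qk jd unfolding f_def c0_def by simp
        moreover have "f p j = v" using pj unfolding f_def by simp
        ultimately have "f p j \<noteq> f q j" using jd by simp
        thus ?thesis by metis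
      qed
      moreover have "\<forall>i\<in>{1..d}. i \<noteq> j \<and> i \<noteq> k \<longrightarrow> f p i = f q i"
        using pj qk unfolding f_def by auto
      ultimately have "L (f p) \<noteq> L (f q)"
        using LHC_two_diff[OF lhc assms(2,3) fc[OF p] fc[OF q]] by blast
      thus False using e by simp
    qed
  qed
  have notin: "L c0 \<notin> (L \<circ> f) ` Sig"
  proof
    assume "L c0 \<in> (L \<circ> f) ` Sig"
    then obtain p where p: "p \<in> Sig" and e: "L c0 = L (f p)" by auto
    obtain j v where pj: "p = (j,v)" by (cases p)
    have jd: "j \<in> {1..d}" "2 \<le> v" using p pj unfolding Sig_def by auto
    have "c0 j = 1" using jd unfolding c0_def by simp
    moreover have "f p j = v" using pj unfolding f_def by simp
    ultimately have "c0 j \<noteq> f p j" using jd by simp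
    hence "c0 \<noteq> f p" by metis
    moreover have "\<forall>i\<in>{1..d}. i \<noteq> j \<and> i \<noteq> j \<longrightarrow> c0 i = f p i"
      using pj unfolding f_def by auto
    ultimately have "L c0 \<noteq> L (f p)"
      using LHC_two_diff[OF lhc assms(2,3) c0c fc[OF p]] by blast
    thus False using e by simp
  qed
  have sub: "insert (L c0) ((L \<circ> f) ` Sig) \<subseteq> S"
    using lhc c0c fc unfolding is_LHC_def by auto
  have finS: "finite S" and cS: "card S = (\<Prod>i=1..r. n i)" using lhc unfolding is_LHC_def by auto
  have "card (insert (L c0) ((L \<circ> f) ` Sig)) = Suc (\<Sum>j=1..d. n j - 1)"
    using notin finSig card_image[OF injLf] cardSig by simp
  hence le: "Suc (\<Sum>j=1..d. n j - 1) \<le> (\<Prod>i=1..r. n i)"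
    using card_mono[OF finS sub] cS by simp
  have "(\<Sum>i=1..d. n i) = (\<Sum>j=1..d. (n j - 1) + 1)"
    by (rule sum.cong) (use n1 in force)+
  also have "\<dots> = (\<Sum>j=1..d. n j - 1) + (\<Sum>j=1..d. (1::nat))" by (rule sum.distrib)
  also have "(\<Sum>j=1..d. (1::nat)) = d" by simp
  finally show ?thesis using le by linarith
qed

end
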